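(* Let $n\ge 7$ be an integer and define the graph $G_n$ as follows. If $n$ is odd, $G_n$ has vertices $v_1,\dots,v_n$ and edges consisting of the cycle $v_1v_2\cdots v_{n-1}v_1$ together with the edges $v_1v_{(n+1)/2}$, $v_1v_n$, $v_{(n+1)/2}v_n$, and $v_iv_{n+1-i}$ for $i=2,3,\dots,(n-1)/2$. If $n$ is even, $G_n$ has vertices $v_1,\dots,v_n$ and edges consisting of the cycle $v_1v_2\cdots v_nv_1$ together with the edges $v_2v_{n/2}$, $v_{(n+4)/2}v_n$, and $v_iv_{n+2-i}$ for $i=2,3,\dots,n/2$. Then $G_n$ is connected of order $n$ and size $\lfloor 3n/2\rfloor+1$, and every minimum vertex cut of $G_n$ induces an edge; more precisely, for $n$ odd $\{v_1,v_{(n+1)/2}\}$ is the unique minimum vertex cut, and for $n$ even the minimum vertex cuts are exactly $\{v_2,v_n\}$ and $\{v_{n/2},v_{(n+4)/2}\}$. In particular $G_n$ has no independent minimum vertex cut.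
   Context: All graphs are finite and simple. A vertex cut of a connected graph $G$ is a set $S\subset V(G)$ such that $G-S$ is disconnected. If $G$ has connectivity $k$, a vertex cut $S$ is called minimum if $|S|=k$. A vertex cut $S$ is called an independent vertex cut if $S$ is an independent set of $G$. *)

theory Defs
  imports Main
begin

(* A finite simple graph is given by a vertex set V and an edge set E of
   2-element subsets of V. *)

definition adj :: "'a set \<Rightarrow> 'a set set \<Rightarrow> 'a \<Rightarrow> 'a \<Rightarrow> bool" where
  "adj V E u v \<longleftrightarrow> u \<in> V \<and> v \<in> V \<and> {u, v} \<in> E"

definition connected_graph :: "'a set \<Rightarrow> 'a set set \<Rightarrow> bool" where
  "connected_graph V E \<longleftrightarrow> V \<noteq> {} \<and> (\<forall>u\<in>V. \<forall>v\<in>V. (adj V E)\<^sup>*\<^sup>* u v)"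

definition disconnected_graph :: "'a set \<Rightarrow> 'a set set \<Rightarrow> bool" where
  "disconnected_graph V E \<longleftrightarrow> (\<exists>u\<in>V. \<exists>v\<in>V. \<not> (adj V E)\<^sup>*\<^sup>* u v)"

definition vertex_cut :: "'a set \<Rightarrow> 'a set set \<Rightarrow> 'a set \<Rightarrow> bool" where
  "vertex_cut V E S \<longleftrightarrow> S \<subseteq> V \<and> disconnected_graph (V - S) E"

definition connectivity :: "'a set \<Rightarrow> 'a set set \<Rightarrow> nat" where
  "connectivity V E = (LEAST k. \<exists>S. S \<subseteq> V \<and> card S = k \<and>
       (disconnected_graph (V - S) E \<or> card (V - S) \<le> 1))"

definition minimum_vertex_cut :: "'a set \<Rightarrow> 'a set set \<Rightarrow> 'a set \<Rightarrow> bool" where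
  "minimum_vertex_cut V E S \<longleftrightarrow> vertex_cut V E S \<and> card S = connectivity V E"

definition independent_set :: "'a set set \<Rightarrow> 'a set \<Rightarrow> bool" where
  "independent_set E S \<longleftrightarrow> (\<forall>u\<in>S. \<forall>v\<in>S. {u, v} \<notin> E)"

definition induces_edge :: "'a set set \<Rightarrow> 'a set \<Rightarrow> bool" where
  "induces_edge E S \<longleftrightarrow> (\<exists>u\<in>S. \<exists>v\<in>S. {u, v} \<in> E)"

(* The graph G_n, vertex v_i represented by the natural number i *)
definition Gn_vertices :: "nat \<Rightarrow> nat set" where
  "Gn_vertices n = {1..n}"

definition Gn_edges :: "nat \<Rightarrow> nat set set" where
  "Gn_edges n =
    (if odd n then
       {{i, i + 1} | i. 1 \<le> i \<and> i \<le> n - 2} \<union> {{n - 1, 1}}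
       \<union> {{1, (n + 1) div 2}, {1, n}, {(n + 1) div 2, n}}
       \<union> {{i, n + 1 - i} | i. 2 \<le> i \<and> i \<le> (n - 1) div 2}
     else
       {{i, i + 1} | i. 1 \<le> i \<and> i \<le> n - 1} \<union> {{n, 1}}
       \<union> {{2, n div 2}, {(n + 4) div 2, n}}
       \<union> {{i, n + 2 - i} | i. 2 \<le> i \<and> i \<le> n div 2})"

end

theory Submission
  imports Defs
begin

lemma adj_sym: "adj W E x y \<Longrightarrow> adj W E y x"
  by (auto simp: adj_def insert_commute)

lemma R_sym: "(adj W E)\<^sup>*\<^sup>* x y \<Longrightarrow> (adj W E)\<^sup>*\<^sup>* y x"
proof (induction rule: rtranclp_induct)
  case base thus ?case by simp
next
  case (step y z)
  from step.hyps(2) have "adj W E z y" by (rule adj_sym)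
  thus ?case using step.IH by (rule converse_rtranclp_into_rtranclp)
qed

lemma seg:
  assumes "\<forall>k. i \<le> k \<and> k \<le> j \<longrightarrow> k \<in> W"
    and "\<forall>k. i \<le> k \<and> k < j \<longrightarrow> {k, Suc k} \<in> E"
    and "i \<le> j"
  shows "(adj W E)\<^sup>*\<^sup>* i j"
  using assms
proof (induction j)
  case 0 thus ?case by simp
next
  case (Suc j)
  show ?case
  proof (cases "i = Suc j")
    case True thus ?thesis by simp
  next
    case False
    hence ij: "i \<le> j" using Suc.prems by simp
    have "(adj W E)\<^sup>*\<^sup>* i j"
      using Suc.IH Suc.prems ij by auto
    moreover have "adj W E j (Suc j)" using Suc.prems ij by (auto simp: adj_def)
    ultimately show ?thesis by (rule rtranclp.rtrancl_into_rtrancl)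
  qed
qed

lemma seg2:
  assumes "\<forall>k. i \<le> k \<and> k \<le> j \<longrightarrow> k \<in> W"
    and "\<forall>k. i \<le> k \<and> k < j \<longrightarrow> {k, Suc k} \<in> E"
    and "i \<le> u" "u \<le> j" "i \<le> v" "v \<le> j"
  shows "(adj W E)\<^sup>*\<^sup>* u v"
proof (cases "u \<le> v")
  case True
  show ?thesis by (rule seg) (use assms True in auto)
next
  case False
  have "(adj W E)\<^sup>*\<^sup>* v u" by (rule seg) (use assms False in auto)
  thus ?thesis by (rule R_sym)
qed

lemma cyc_conn:
  fixes N a b u v :: nat
  assumes cyc: "\<forall>i. 1 \<le> i \<and> i < N \<longrightarrow> {i, Suc i} \<in> E"
    and wrap: "{N, 1} \<in> E"
    and inW: "\<forall>k. 1 \<le> k \<and> k \<le> N \<and> k \<noteq> a \<and> k \<noteq> b \<longrightarrow> k \<in> W"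
    and ab: "1 \<le> a" "a \<le> b" "b \<le> N"
    and cr: "b \<le> Suc a \<or> (a = 1 \<and> b = N) \<or> (\<exists>p q. {p, q} \<in> E \<and> a < p \<and> p < b \<and> 1 \<le> q \<and> q \<le> N \<and> (q < a \<or> b < q))"
    and u: "1 \<le> u" "u \<le> N" "u \<noteq> a" "u \<noteq> b"
    and v: "1 \<le> v" "v \<le> N" "v \<noteq> a" "v \<noteq> b"
  shows "(adj W E)\<^sup>*\<^sup>* u v"
proof -
  let ?R = "(adj W E)\<^sup>*\<^sup>*"
  have inW': "k \<in> W" if "1 \<le> k" "k \<le> N" "k \<noteq> a" "k \<noteq> b" for k
    using inW that by blast
  have cyc': "{i, Suc i} \<in> E" if "1 \<le> i" "i < N" for i
    using cyc that by blast
  have PP: "?R x y" if "a < x" "x < b" "a < y" "y < b" for x y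
    by (rule seg2[of "Suc a" "b - 1"]) (use that ab in \<open>auto intro!: inW' cyc'\<close>)
  have Q1: "?R x y" if "b < x" "x \<le> N" "b < y" "y \<le> N" for x y
    by (rule seg2[of "Suc b" "N"]) (use that ab in \<open>auto intro!: inW' cyc'\<close>)
  have Q2: "?R x y" if "1 \<le> x" "x < a" "1 \<le> y" "y < a" for x y
    by (rule seg2[of "1" "a - 1"]) (use that ab in \<open>auto intro!: inW' cyc'\<close>)
  have Q12: "?R x y" if "b < x" "x \<le> N" "1 \<le> y" "y < a" for x y
  proof -
    have "?R x N" using Q1 that by auto
    moreover have "adj W E N 1" using that inW wrap ab by (auto simp: adj_def)
    moreover have "?R 1 y" using Q2 that by auto
    ultimately show ?thesis using rtranclp.rtrancl_into_rtrancl rtranclp_trans by metis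
  qed
  have QQ: "?R x y" if hq: "(b < x \<and> x \<le> N) \<or> (1 \<le> x \<and> x < a)" "(b < y \<and> y \<le> N) \<or> (1 \<le> y \<and> y < a)" for x y
  proof -
    consider "b < x \<and> x \<le> N" "b < y \<and> y \<le> N" | "b < x \<and> x \<le> N" "1 \<le> y \<and> y < a"
      | "1 \<le> x \<and> x < a" "b < y \<and> y \<le> N" | "1 \<le> x \<and> x < a" "1 \<le> y \<and> y < a"
      using hq by blast
    thus ?thesis
    proof cases
      case 1 thus ?thesis using Q1 by blast
    next
      case 2 thus ?thesis using Q12 by blast
    next
      case 3 thus ?thesis by (intro R_sym[OF Q12[of y x]]) auto
    next
      case 4 thus ?thesis using Q2 by blast
    qed
  qed
  have PQ: "?R x y" if "a < x" "x < b" "(b < y \<and> y \<le> N) \<or> (1 \<le> y \<and> y < a)" for x y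
  proof -
    have "\<not> b \<le> Suc a" using that by auto
    moreover have "\<not> (a = 1 \<and> b = N)" using that by auto
    ultimately obtain p q where pq: "{p, q} \<in> E" "a < p" "p < b" "1 \<le> q" "q \<le> N" "q < a \<or> b < q"
      using cr by blast
    have "p \<in> W" using pq ab by (intro inW') auto
    moreover have "q \<in> W" using pq ab by (intro inW') auto
    ultimately have "adj W E p q" using pq by (auto simp: adj_def)
    moreover have "?R x p" using PP that pq by auto
    moreover have "?R q y" using QQ pq that by auto
    ultimately show ?thesis using rtranclp.rtrancl_into_rtrancl[of "adj W E" x p q] rtranclp_trans[of "adj W E" x q y] by blast
  qed
  have cls: "a < x \<and> x < b \<or> (b < x \<and> x \<le> N) \<or> (1 \<le> x \<and> x < a)" if "1 \<le> x" "x \<le> N" "x \<noteq> a" "x \<noteq> b" for x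
    using that by auto
  show ?thesis
  proof (cases "a < u \<and> u < b")
    case T1: True
    show ?thesis
    proof (cases "a < v \<and> v < b")
      case True thus ?thesis using T1 PP by blast
    next
      case False thus ?thesis using T1 PQ cls[OF v] by blast
    qed
  next
    case F1: False
    show ?thesis
    proof (cases "a < v \<and> v < b")
      case True
      have "?R v u" using True F1 PQ cls[OF u] by blast
      thus ?thesis by (rule R_sym)
    next
      case False thus ?thesis using F1 QQ cls[OF v] cls[OF u] by blast
    qed
  qed
qed

lemma E_even: "Gn_edges (2*k) = {{i, i+1}|i. 1\<le>i \<and> i \<le> 2*k-1} \<union> {{2*k,1}} \<union> {{2,k},{k+2,2*k}} \<union> {{i, 2*k+2-i}|i. 2\<le>i \<and> i\<le>k}"
  by (simp add: Gn_edges_def)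

lemma E_odd: "Gn_edges (2*k+1) = {{i, i+1}|i. 1\<le>i \<and> i \<le> 2*k-1} \<union> {{2*k,1}} \<union> {{1,k+1},{1,2*k+1},{k+1,2*k+1}} \<union> {{i, 2*k+2-i}|i. 2\<le>i \<and> i\<le>k}"
  by (simp add: Gn_edges_def)

lemma Ee_cyc: "1 \<le> i \<Longrightarrow> i < 2*k \<Longrightarrow> {i, Suc i} \<in> Gn_edges (2*k)"
  unfolding E_even by (intro UnI1 CollectI exI[of _ i]) auto
lemma Ee_wrap: "{2*k, 1} \<in> Gn_edges (2*k)"
  unfolding E_even by blast
lemma Ee_x: "{2, k} \<in> Gn_edges (2*k)" "{k+2, 2*k} \<in> Gn_edges (2*k)"
  unfolding E_even by blast+
lemma Ee_ch: "2 \<le> i \<Longrightarrow> i \<le> k \<Longrightarrow> j = 2*k+2-i \<Longrightarrow> {i, j} \<in> Gn_edges (2*k)"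
  unfolding E_even by (intro UnI2 CollectI exI[of _ i]) auto
lemma Ee_ch': "k+2 \<le> j \<Longrightarrow> j \<le> 2*k \<Longrightarrow> i = 2*k+2-j \<Longrightarrow> {j, i} \<in> Gn_edges (2*k)"
  using Ee_ch[of "2*k+2-j" k j] by (simp add: insert_commute)

lemma Eo_cyc: "1 \<le> i \<Longrightarrow> i < 2*k \<Longrightarrow> {i, Suc i} \<in> Gn_edges (2*k+1)"
  unfolding E_odd by (intro UnI1 CollectI exI[of _ i]) auto
lemma Eo_wrap: "{2*k, 1} \<in> Gn_edges (2*k+1)"
  unfolding E_odd by blast
lemma Eo_x: "{1,k+1} \<in> Gn_edges (2*k+1)" "{1,2*k+1} \<in> Gn_edges (2*k+1)" "{k+1,2*k+1} \<in> Gn_edges (2*k+1)"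
  unfolding E_odd by blast+
lemma Eo_ch: "2 \<le> i \<Longrightarrow> i \<le> k \<Longrightarrow> j = 2*k+2-i \<Longrightarrow> {i, j} \<in> Gn_edges (2*k+1)"
  unfolding E_odd by (intro UnI2 CollectI exI[of _ i]) auto
lemma Eo_ch': "k+2 \<le> j \<Longrightarrow> j \<le> 2*k \<Longrightarrow> i = 2*k+2-j \<Longrightarrow> {j, i} \<in> Gn_edges (2*k+1)"
  using Eo_ch[of "2*k+2-j" k j] by (simp add: insert_commute)

lemma nb_even1: "k \<ge> 4 \<Longrightarrow> {1, q} \<in> Gn_edges (2*k) \<Longrightarrow> q = 2 \<or> q = 2*k"
  unfolding E_even by (elim UnE; auto simp: doubleton_eq_iff)
lemma nb_even2: "k \<ge> 4 \<Longrightarrow> {k+1, q} \<in> Gn_edges (2*k) \<Longrightarrow> q = k \<or> q = k+2"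
  unfolding E_even by (elim UnE; auto simp: doubleton_eq_iff)
lemma nb_odd: "k \<ge> 3 \<Longrightarrow> {2*k+1, q} \<in> Gn_edges (2*k+1) \<Longrightarrow> q = 1 \<or> q = k+1"
  unfolding E_odd by (elim UnE; auto simp: doubleton_eq_iff)

lemma ex2I: "P p q \<Longrightarrow> \<exists>p q. P p q" by blast

lemma cross_even:
  assumes k: "4 \<le> k" and ab: "1 \<le> a" "Suc a < b" "b \<le> 2*k"
    and n1: "\<not>(a=1 \<and> b=2*k)" and n2: "\<not>(a=2 \<and> b=2*k)" and n3: "\<not>(a=k \<and> b=k+2)"
  shows "\<exists>p q. {p,q} \<in> Gn_edges (2*k) \<and> a<p \<and> p<b \<and> 1\<le>q \<and> q\<le>2*k \<and> (q<a \<or> b<q)"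
proof -
  have e1: "{k,2} \<in> Gn_edges (2*k)" by (metis Ee_x(1) insert_commute)
  have e2: "{k+2,2*k} \<in> Gn_edges (2*k)" using Ee_x(2) by simp
  show ?thesis
  proof (cases "a+b \<le> 2*k")
    case c1: True
    have e: "{a+1, 2*k+1-a} \<in> Gn_edges (2*k)"
    proof (cases "a+1 \<le> k")
      case True show ?thesis by (rule Ee_ch) (use True ab in arith)+
    next
      case False show ?thesis by (rule Ee_ch') (use False c1 ab in arith)+
    qed
    show ?thesis by (rule ex2I[of _ "a+1" "2*k+1-a"]) (use e c1 ab in \<open>(intro conjI; (assumption | arith))\<close>)
  next
    case c1: False
    show ?thesis
    proof (cases "a+b = 2*k+1")
      case c2: True
      show ?thesis
      proof (cases "a = 2")
        case True
        show ?thesis by (rule ex2I[of _ "k+2" "2*k"]) (use e2 c2 True ab k in \<open>(intro conjI; (assumption | arith))\<close>)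
      next
        case False
        have "a \<noteq> 1" using n1 c2 by auto
        hence "a \<ge> 3" using False ab by arith
        show ?thesis by (rule ex2I[of _ "k" "2"]) (use e1 c2 \<open>a \<ge> 3\<close> ab k in \<open>(intro conjI; (assumption | arith))\<close>)
      qed
    next
      case c2: False
      show ?thesis
      proof (cases "a+b = 2*k+2")
        case c3: True
        have "a \<noteq> 2" using n2 c3 by auto
        moreover have "a \<noteq> k" using n3 c3 by auto
        ultimately have "3 \<le> a" "a < k" using ab c3 by arith+
        show ?thesis by (rule ex2I[of _ "k" "2"]) (use e1 c3 \<open>3 \<le> a\<close> \<open>a < k\<close> ab k in \<open>(intro conjI; (assumption | arith))\<close>)
      next
        case c3: False
        show ?thesis
        proof (cases "a+b = 2*k+3")
          case c4: True
          show ?thesis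
          proof (cases "a = 3")
            case True
            show ?thesis by (rule ex2I[of _ "k" "2"]) (use e1 c4 True ab k in \<open>(intro conjI; (assumption | arith))\<close>)
          next
            case False
            hence "a \<ge> 4" using c4 ab by arith
            show ?thesis by (rule ex2I[of _ "k+2" "2*k"]) (use e2 c4 \<open>a \<ge> 4\<close> ab k in \<open>(intro conjI; (assumption | arith))\<close>)
          qed
        next
          case c4: False
          hence c5: "a+b \<ge> 2*k+4" using c1 c2 c3 by arith
          have e: "{b-1, 2*k+3-b} \<in> Gn_edges (2*k)" by (rule Ee_ch') (use c5 ab in arith)+
          show ?thesis by (rule ex2I[of _ "b-1" "2*k+3-b"]) (use e c5 ab in \<open>(intro conjI; (assumption | arith))\<close>)
        qed
      qed
    qed
  qed
qed

lemma cross_odd: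
  assumes k: "3 \<le> k" and ab: "1 \<le> a" "Suc a < b" "b \<le> 2*k" and n1: "\<not>(a=1 \<and> b=2*k)"
  shows "\<exists>p q. {p,q} \<in> Gn_edges (2*k+1) \<and> a<p \<and> p<b \<and> 1\<le>q \<and> q\<le>2*k \<and> (q<a \<or> b<q)"
proof -
  have e1: "{k+1,1} \<in> Gn_edges (2*k+1)" by (metis Eo_x(1) insert_commute)
  show ?thesis
  proof (cases "a+b \<le> 2*k")
    case c1: True
    have e: "{a+1, 2*k+1-a} \<in> Gn_edges (2*k+1)"
    proof (cases "a+1 \<le> k")
      case True show ?thesis by (rule Eo_ch) (use True ab in arith)+
    next
      case False show ?thesis by (rule Eo_ch') (use False c1 ab in arith)+
    qed
    show ?thesis by (rule ex2I[of _ "a+1" "2*k+1-a"]) (use e c1 ab in \<open>(intro conjI; (assumption | arith))\<close>)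
  next
    case c1: False
    show ?thesis
    proof (cases "a+b \<le> 2*k+3")
      case c2: True
      have "a \<noteq> 1 \<or> b \<noteq> 2*k" using n1 by auto
      hence "1 < a" "a < k+1" "k+1 < b" using c1 c2 ab by arith+
      show ?thesis by (rule ex2I[of _ "k+1" "1"]) (use e1 \<open>1 < a\<close> \<open>a < k+1\<close> \<open>k+1 < b\<close> ab k in \<open>(intro conjI; (assumption | arith))\<close>)
    next
      case c2: False
      have e: "{b-1, 2*k+3-b} \<in> Gn_edges (2*k+1)" by (rule Eo_ch') (use c2 ab in arith)+
      show ?thesis by (rule ex2I[of _ "b-1" "2*k+3-b"]) (use e c2 ab in \<open>(intro conjI; (assumption | arith))\<close>)
    qed
  qed
qed

lemma injD: assumes h: "\<And>i j. a\<le>i \<Longrightarrow> i\<le>b \<Longrightarrow> a\<le>j \<Longrightarrow> j\<le>b \<Longrightarrow> ((i = j \<and> f i = f j) \<or> (i = f j \<and> f i = j)) \<Longrightarrow> i = j"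
  shows "inj_on (\<lambda>i. {i, f i}) {a..b}"
proof (rule inj_onI)
  fix x y assume x: "x \<in> {a..b}" and y: "y \<in> {a..b}" and e: "{x, f x} = {y, f y}"
  from e have "(x = y \<and> f x = f y) \<or> (x = f y \<and> f x = y)" by (simp add: doubleton_eq_iff)
  thus "x = y" using h x y by auto
qed
lemma disjD: assumes h: "\<And>i j. a\<le>i \<Longrightarrow> i\<le>b \<Longrightarrow> c\<le>j \<Longrightarrow> j\<le>d \<Longrightarrow> ((i = j \<and> f i = g j) \<or> (i = g j \<and> f i = j)) \<Longrightarrow> False"
  shows "(\<lambda>i. {i, f i}) ` {a..b} \<inter> (\<lambda>i. {i, g i}) ` {c..d} = {}"
proof -
  { fix i j assume i: "i \<in> {a..b}" and j: "j \<in> {c..d}" and e: "{i, f i} = {j, g j}"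
    from e have "(i = j \<and> f i = g j) \<or> (i = g j \<and> f i = j)" by (simp add: doubleton_eq_iff)
    hence False using h i j by auto }
  thus ?thesis by blast
qed
lemma notA: assumes h: "\<And>i. a\<le>i \<Longrightarrow> i\<le>b \<Longrightarrow> ((x = i \<and> y = f i) \<or> (x = f i \<and> y = i)) \<Longrightarrow> False"
  shows "{x,y} \<notin> (\<lambda>i. {i, f i}) ` {a..b}"
proof
  assume "{x,y} \<in> (\<lambda>i. {i, f i}) ` {a..b}"
  then obtain i where i: "i \<in> {a..b}" and e: "{x,y} = {i, f i}" by blast
  from e have "(x = i \<and> y = f i) \<or> (x = f i \<and> y = i)" by (simp add: doubleton_eq_iff)
  thus False using h i by auto
qed
lemma cardA: "card ((\<lambda>i. {i, i+1}) ` {1..m}) = m"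
proof -
  have "inj_on (\<lambda>i::nat. {i, i+1}) {1..m}"
    by (rule injD) arith
  thus ?thesis by (simp add: card_image)
qed

lemma cardB: "card ((\<lambda>i. {i, 2*k+2-i}) ` {2..k}) = k - 1"
proof -
  have "inj_on (\<lambda>i::nat. {i, 2*k+2-i}) {2..k}"
    by (rule injD) arith
  thus ?thesis by (simp add: card_image)
qed

lemma setc_img: "{f i | i. a \<le> i \<and> i \<le> b} = f ` {a..b}" by auto

lemma card_even:
  assumes k: "4 \<le> k"
  shows "card (Gn_edges (2*k)) = 3*k+1"
proof -
  let ?A = "(\<lambda>i. {i, i+1}) ` {1..2*k-1}"
  let ?B = "(\<lambda>i. {i, 2*k+2-i}) ` {2..k}"
  have eq: "Gn_edges (2*k) = insert {2*k,1} (insert {2,k} (insert {k+2,2*k} (?A \<union> ?B)))"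
    unfolding E_even setc_img by blast
  have AB: "?A \<inter> ?B = {}" by (rule disjD) arith
  have m0: "{k+2,2*k} \<notin> ?A" by (rule notA) (use k in arith)
  have m1: "{k+2,2*k} \<notin> ?B" by (rule notA) (use k in arith)
  have m2: "{2,k} \<notin> ?A" by (rule notA) (use k in arith)
  have m3: "{2,k} \<notin> ?B" by (rule notA) (use k in arith)
  have m4: "{2*k,1} \<notin> ?A" by (rule notA) (use k in arith)
  have m5: "{2*k,1} \<notin> ?B" by (rule notA) (use k in arith)
  have m6: "{2,k} \<noteq> {k+2,2*k}" "{2*k,1} \<noteq> {2,k}" "{2*k,1} \<noteq> {k+2,2*k}"
    using k by (simp_all add: doubleton_eq_iff)
  have n: "{k+2,2*k} \<notin> ?A \<union> ?B" "{2,k} \<notin> insert {k+2,2*k} (?A \<union> ?B)"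
     "{2*k,1} \<notin> insert {2,k} (insert {k+2,2*k} (?A \<union> ?B))" using m0 m1 m2 m3 m4 m5 m6 by blast+
  have "card (?A \<union> ?B) = (2*k-1) + (k-1)"
    using AB cardA[of "2*k-1"] cardB[of k] by (simp add: card_Un_disjoint)
  thus ?thesis using n k unfolding eq by simp
qed

lemma card_odd:
  assumes k: "3 \<le> k"
  shows "card (Gn_edges (2*k+1)) = 3*k+2"
proof -
  let ?A = "(\<lambda>i. {i, i+1}) ` {1..2*k-1}"
  let ?B = "(\<lambda>i. {i, 2*k+2-i}) ` {2..k}"
  have eq: "Gn_edges (2*k+1) = insert {2*k,1} (insert {1,k+1} (insert {1,2*k+1} (insert {k+1,2*k+1} (?A \<union> ?B))))"
    unfolding E_odd setc_img by blast
  have AB: "?A \<inter> ?B = {}" by (rule disjD) arith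
  have m0: "{k+1,2*k+1} \<notin> ?A" by (rule notA) (use k in arith)
  have m1: "{k+1,2*k+1} \<notin> ?B" by (rule notA) (use k in arith)
  have m2: "{1,2*k+1} \<notin> ?A" by (rule notA) (use k in arith)
  have m3: "{1,2*k+1} \<notin> ?B" by (rule notA) (use k in arith)
  have m4: "{1,k+1} \<notin> ?A" by (rule notA) (use k in arith)
  have m5: "{1,k+1} \<notin> ?B" by (rule notA) (use k in arith)
  have m6: "{2*k,1} \<notin> ?A" by (rule notA) (use k in arith)
  have m7: "{2*k,1} \<notin> ?B" by (rule notA) (use k in arith)
  have m8: "{1,2*k+1} \<noteq> {k+1,2*k+1}" "{1,k+1} \<noteq> {1,2*k+1}" "{1,k+1} \<noteq> {k+1,2*k+1}"
    "{2*k,1} \<noteq> {1,k+1}" "{2*k,1} \<noteq> {1,2*k+1}" "{2*k,1} \<noteq> {k+1,2*k+1}"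
    using k by (simp_all add: doubleton_eq_iff)
  have n: "{k+1,2*k+1} \<notin> ?A \<union> ?B" "{1,2*k+1} \<notin> insert {k+1,2*k+1} (?A \<union> ?B)"
    "{1,k+1} \<notin> insert {1,2*k+1} (insert {k+1,2*k+1} (?A \<union> ?B))"
    "{2*k,1} \<notin> insert {1,k+1} (insert {1,2*k+1} (insert {k+1,2*k+1} (?A \<union> ?B)))"
    using m0 m1 m2 m3 m4 m5 m6 m7 m8 by blast+
  have "card (?A \<union> ?B) = (2*k-1) + (k-1)"
    using AB cardA[of "2*k-1"] cardB[of k] by (simp add: card_Un_disjoint)
  thus ?thesis using n k unfolding eq by simp
qed

definition conn :: "'a set \<Rightarrow> 'a set set \<Rightarrow> bool" where
  "conn W E \<longleftrightarrow> (\<forall>u\<in>W. \<forall>v\<in>W. (adj W E)\<^sup>*\<^sup>* u v)"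

lemma disc_conn: "disconnected_graph W E \<longleftrightarrow> \<not> conn W E"
  unfolding disconnected_graph_def conn_def by blast

lemma shape2:
  assumes "finite (S::nat set)" "card S \<le> 2"
  shows "S = {} \<or> (\<exists>c. S = {c}) \<or> (\<exists>a b. a < b \<and> S = {a,b})"
proof -
  consider "card S = 0" | "card S = 1" | "card S = 2" using assms(2) by arith
  thus ?thesis
  proof cases
    case 1 thus ?thesis using assms(1) by simp
  next
    case 2 thus ?thesis by (auto simp: card_1_singleton_iff)
  next
    case 3
    then obtain x y where xy: "S = {x,y}" "x \<noteq> y" by (auto simp: card_2_iff)
    show ?thesis
    proof (cases "x < y")
      case True thus ?thesis using xy by blast
    next
      case False
      hence "y < x" using xy by arith
      moreover have "S = {y,x}" using xy by auto
      ultimately show ?thesis by blast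
    qed
  qed
qed

lemma cyc_full:
  fixes N u v :: nat
  assumes cyc: "\<forall>i. 1 \<le> i \<and> i < N \<longrightarrow> {i, Suc i} \<in> E"
    and wrap: "{N, 1} \<in> E" and N: "2 \<le> N"
    and inW: "\<forall>k. 1 \<le> k \<and> k \<le> N \<longrightarrow> k \<in> W"
    and u: "1 \<le> u" "u \<le> N" and v: "1 \<le> v" "v \<le> N"
  shows "(adj W E)\<^sup>*\<^sup>* u v"
proof -
  have h: "(adj W E)\<^sup>*\<^sup>* x 2" if x: "1 \<le> x" "x \<le> N" for x
  proof (cases "x = 1")
    case True
    have "adj W E 1 2" unfolding adj_def using inW cyc N by (auto simp: numeral_2_eq_2)
    thus ?thesis using True by auto
  next
    case False
    show ?thesis
      by (rule cyc_conn[where a=1 and b=1 and N=N]) (use cyc wrap inW N x False in auto)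
  qed
  show ?thesis using h[OF u] R_sym[OF h[OF v]] by (rule rtranclp_trans)
qed

lemma isolated: "(\<And>q. \<not> adj W E x q) \<Longrightarrow> (adj W E)\<^sup>*\<^sup>* x y \<Longrightarrow> y = x"
  by (erule converse_rtranclpE) auto

lemma even_conn:
  assumes k: "4 \<le> k" and S: "S \<subseteq> {1..2*k}" "card S \<le> 2" "S \<noteq> {2,2*k}" "S \<noteq> {k,k+2}"
  shows "conn ({1..2*k} - S) (Gn_edges (2*k))"
proof -
  let ?E = "Gn_edges (2*k)" and ?W = "{1..2*k} - S"
  have cyc: "\<forall>i. 1 \<le> i \<and> i < 2*k \<longrightarrow> {i, Suc i} \<in> ?E" using Ee_cyc by blast
  have fin: "finite S" using S(1) finite_subset by blast
  show ?thesis unfolding conn_def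
  proof (intro ballI)
    fix u v assume u: "u \<in> ?W" and v: "v \<in> ?W"
    consider "S = {}" | c where "S = {c}" | a b where "a < b" "S = {a,b}"
      using shape2[OF fin S(2)] by blast
    thus "(adj ?W ?E)\<^sup>*\<^sup>* u v"
    proof cases
      case 1
      show ?thesis by (rule cyc_full[where N="2*k"]) (use cyc Ee_wrap k u v 1 in auto)
    next
      case (2 c)
      show ?thesis by (rule cyc_conn[where N="2*k" and a=c and b=c]) (use cyc Ee_wrap k u v 2 S(1) in auto)
    next
      case (3 a b)
      have cr: "b \<le> Suc a \<or> (a = 1 \<and> b = 2*k) \<or> (\<exists>p q. {p, q} \<in> ?E \<and> a < p \<and> p < b \<and> 1 \<le> q \<and> q \<le> 2*k \<and> (q < a \<or> b < q))"
      proof (cases "b \<le> Suc a \<or> (a = 1 \<and> b = 2*k)")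
        case True thus ?thesis by blast
      next
        case False
        have "\<not>(a=2 \<and> b=2*k)" "\<not>(a=k \<and> b=k+2)" using S(3,4) 3 by auto
        moreover have "1 \<le> a" "b \<le> 2*k" using 3 S(1) by auto
        ultimately show ?thesis using cross_even[OF k, of a b] False by auto
      qed
      show ?thesis by (rule cyc_conn[where N="2*k" and a=a and b=b]) (use cyc Ee_wrap k u v 3 S(1) cr in auto)
    qed
  qed
qed

lemma even_cut:
  assumes k: "4 \<le> k" and S: "S = {2,2*k} \<or> S = {k,k+2}"
  shows "\<not> conn ({1..2*k} - S) (Gn_edges (2*k))"
proof
  let ?E = "Gn_edges (2*k)" and ?W = "{1..2*k} - S"
  assume c: "conn ?W ?E"
  show False
  proof (cases "S = {2,2*k}")
    case True
    have "1 \<in> ?W" "3 \<in> ?W" using True k by auto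
    hence r: "(adj ?W ?E)\<^sup>*\<^sup>* 1 3" using c unfolding conn_def by blast
    have "\<not> adj ?W ?E 1 q" for q
    proof
      assume "adj ?W ?E 1 q"
      hence "q \<in> ?W" "{1,q} \<in> ?E" unfolding adj_def by auto
      thus False using nb_even1[OF k] True by auto
    qed
    with r have "(3::nat) = 1" by (rule isolated[rotated])
    thus False by simp
  next
    case False
    hence Sk: "S = {k,k+2}" using S by blast
    have "k+1 \<in> ?W" "1 \<in> ?W" using Sk k by auto
    hence r: "(adj ?W ?E)\<^sup>*\<^sup>* (k+1) 1" using c unfolding conn_def by blast
    have "\<not> adj ?W ?E (k+1) q" for q
    proof
      assume "adj ?W ?E (k+1) q"
      hence "q \<in> ?W" "{k+1,q} \<in> ?E" unfolding adj_def by auto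
      thus False using nb_even2[OF k] Sk by auto
    qed
    with r have "(1::nat) = k+1" by (rule isolated[rotated])
    thus False using k by simp
  qed
qed

lemma odd_conn:
  assumes k: "3 \<le> k" and S: "S \<subseteq> {1..2*k+1}" "card S \<le> 2" "S \<noteq> {1,k+1}"
  shows "conn ({1..2*k+1} - S) (Gn_edges (2*k+1))"
proof -
  let ?E = "Gn_edges (2*k+1)" and ?W = "{1..2*k+1} - S"
  let ?R = "(adj ?W ?E)\<^sup>*\<^sup>*"
  have cyc: "\<forall>i. 1 \<le> i \<and> i < 2*k \<longrightarrow> {i, Suc i} \<in> ?E" using Eo_cyc by blast
  have fin: "finite S" using S(1) finite_subset by blast
  have CP: "?R u v" if u: "u \<in> ?W" "u \<le> 2*k" and v: "v \<in> ?W" "v \<le> 2*k" for u v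
  proof -
    consider "S = {}" | c where "S = {c}" | a b where "a < b" "S = {a,b}"
      using shape2[OF fin S(2)] by blast
    thus ?thesis
    proof cases
      case 1
      show ?thesis by (rule cyc_full[where N="2*k"]) (use cyc Eo_wrap k u v 1 in auto)
    next
      case (2 c)
      show ?thesis
      proof (cases "c = 2*k+1")
        case True
        show ?thesis by (rule cyc_full[where N="2*k"]) (use cyc Eo_wrap k u v 2 True in auto)
      next
        case False
        show ?thesis by (rule cyc_conn[where N="2*k" and a=c and b=c]) (use cyc Eo_wrap k u v 2 S(1) False in auto)
      qed
    next
      case (3 a b)
      show ?thesis
      proof (cases "b = 2*k+1")
        case True
        show ?thesis by (rule cyc_conn[where N="2*k" and a=a and b=a]) (use cyc Eo_wrap k u v 3 S(1) True in auto)
      next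
        case bF: False
        have b2: "1 \<le> a" "b \<le> 2*k" using 3 S(1) bF by auto
        have cr: "b \<le> Suc a \<or> (a = 1 \<and> b = 2*k) \<or> (\<exists>p q. {p, q} \<in> ?E \<and> a < p \<and> p < b \<and> 1 \<le> q \<and> q \<le> 2*k \<and> (q < a \<or> b < q))"
        proof (cases "b \<le> Suc a \<or> (a = 1 \<and> b = 2*k)")
          case True thus ?thesis by blast
        next
          case False
          thus ?thesis using cross_odd[OF k, of a b] b2 by auto
        qed
        show ?thesis by (rule cyc_conn[where N="2*k" and a=a and b=b]) (use cyc Eo_wrap k u v 3 b2 cr in auto)
      qed
    qed
  qed
  have hub: "\<exists>h. h \<in> ?W \<and> h \<le> 2*k \<and> adj ?W ?E (2*k+1) h" if n: "2*k+1 \<in> ?W"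
  proof (cases "1 \<in> S")
    case False
    have "{2*k+1,1} \<in> ?E" by (metis Eo_x(2) insert_commute)
    hence "adj ?W ?E (2*k+1) 1" using n False k unfolding adj_def by auto
    thus ?thesis using False k by auto
  next
    case True
    have "k+1 \<notin> S"
    proof
      assume "k+1 \<in> S"
      hence sub: "{1,k+1} \<subseteq> S" using True by auto
      have "card {1,k+1} = 2" using k by simp
      hence "{1,k+1} = S" using card_subset_eq[OF fin sub] S(2) card_mono[OF fin sub] by auto
      thus False using S(3) by auto
    qed
    hence A: "adj ?W ?E (2*k+1) (k+1)" using n k Eo_x(3) unfolding adj_def by (auto simp: insert_commute)
    show ?thesis by (rule exI[of _ "k+1"]) (use A \<open>k+1 \<notin> S\<close> k in auto)
  qed
  show ?thesis unfolding conn_def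
  proof (intro ballI)
    fix u v assume u: "u \<in> ?W" and v: "v \<in> ?W"
    have toh: "\<exists>h. h \<in> ?W \<and> h \<le> 2*k \<and> ?R x h" if x: "x \<in> ?W" for x
    proof (cases "x = 2*k+1")
      case True
      then obtain h where "h \<in> ?W" "h \<le> 2*k" "adj ?W ?E (2*k+1) h" using hub x by blast
      thus ?thesis using True by blast
    next
      case False
      hence "x \<le> 2*k" using x by auto
      thus ?thesis using x by blast
    qed
    obtain hu where hu: "hu \<in> ?W" "hu \<le> 2*k" "?R u hu" using toh[OF u] by blast
    obtain hv where hv: "hv \<in> ?W" "hv \<le> 2*k" "?R v hv" using toh[OF v] by blast
    have "?R hu hv" using CP hu hv by blast
    thus "?R u v" using hu(3) R_sym[OF hv(3)] by (meson rtranclp_trans)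
  qed
qed

lemma odd_cut:
  assumes k: "3 \<le> k"
  shows "\<not> conn ({1..2*k+1} - {1,k+1}) (Gn_edges (2*k+1))"
proof
  let ?E = "Gn_edges (2*k+1)" and ?W = "{1..2*k+1} - {1,k+1}"
  assume c: "conn ?W ?E"
  have "2*k+1 \<in> ?W" "2 \<in> ?W" using k by auto
  hence r: "(adj ?W ?E)\<^sup>*\<^sup>* (2*k+1) 2" using c unfolding conn_def by blast
  have "\<not> adj ?W ?E (2*k+1) q" for q
  proof
    assume "adj ?W ?E (2*k+1) q"
    hence "q \<in> ?W" "{2*k+1,q} \<in> ?E" unfolding adj_def by auto
    thus False using nb_odd[OF k] by auto
  qed
  with r have "(2::nat) = 2*k+1" by (rule isolated[rotated])
  thus False by simp
qed

lemma connectivity2: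
  assumes h1: "\<And>S. S \<subseteq> V \<Longrightarrow> card S < 2 \<Longrightarrow> \<not> disconnected_graph (V - S) E \<and> \<not> card (V - S) \<le> 1"
    and h2: "S0 \<subseteq> V" "card S0 = 2" "disconnected_graph (V - S0) E"
  shows "connectivity V E = 2"
  unfolding connectivity_def
proof (rule Least_equality)
  show "\<exists>S. S \<subseteq> V \<and> card S = 2 \<and> (disconnected_graph (V - S) E \<or> card (V - S) \<le> 1)"
    using h2 by blast
next
  fix y assume "\<exists>S. S \<subseteq> V \<and> card S = y \<and> (disconnected_graph (V - S) E \<or> card (V - S) \<le> 1)"
  then obtain S where "S \<subseteq> V" "card S = y" "disconnected_graph (V - S) E \<or> card (V - S) \<le> 1" by blast
  thus "2 \<le> y" using h1 by (metis not_le)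
qed

lemma even_cuts:
  assumes k: "4 \<le> k"
  shows "minimum_vertex_cut {1..2*k} (Gn_edges (2*k)) S \<longleftrightarrow> (S = {2,2*k} \<or> S = {k,k+2})"
proof -
  let ?V = "{1..2*k}" and ?E = "Gn_edges (2*k)"
  have c2: "connectivity ?V ?E = 2"
  proof (rule connectivity2[of ?V ?E "{2,2*k}"])
    fix S assume S: "S \<subseteq> ?V" "card S < 2"
    have "card {2,2*k} = 2" "card {k,k+2} = 2" using k by auto
    hence "S \<noteq> {2,2*k}" "S \<noteq> {k,k+2}" using S by auto
    hence "conn (?V - S) ?E" using even_conn[OF k S(1)] S(2) by auto
    moreover have "card (?V - S) = 2*k - card S"
      using S(1) by (simp add: card_Diff_subset finite_subset)
    ultimately show "\<not> disconnected_graph (?V - S) ?E \<and> \<not> card (?V - S) \<le> 1"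
      using S k by (auto simp: disc_conn)
  next
    show "{2,2*k} \<subseteq> ?V" "card {2,2*k} = 2" using k by auto
    show "disconnected_graph (?V - {2,2*k}) ?E" using even_cut[OF k] by (auto simp: disc_conn)
  qed
  show ?thesis
  proof
    assume m: "minimum_vertex_cut ?V ?E S"
    hence S: "S \<subseteq> ?V" "\<not> conn (?V - S) ?E" "card S = 2"
      unfolding minimum_vertex_cut_def vertex_cut_def c2 by (auto simp: disc_conn)
    show "S = {2,2*k} \<or> S = {k,k+2}"
      using even_conn[OF k S(1)] S by auto
  next
    assume S: "S = {2,2*k} \<or> S = {k,k+2}"
    have "S \<subseteq> ?V" "card S = 2" using S k by auto
    moreover have "\<not> conn (?V - S) ?E" using even_cut[OF k S] .
    ultimately show "minimum_vertex_cut ?V ?E S"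
      unfolding minimum_vertex_cut_def vertex_cut_def c2 by (auto simp: disc_conn)
  qed
qed

lemma odd_cuts:
  assumes k: "3 \<le> k"
  shows "minimum_vertex_cut {1..2*k+1} (Gn_edges (2*k+1)) S \<longleftrightarrow> S = {1,k+1}"
proof -
  let ?V = "{1..2*k+1}" and ?E = "Gn_edges (2*k+1)"
  have c2: "connectivity ?V ?E = 2"
  proof (rule connectivity2[of ?V ?E "{1,k+1}"])
    fix S assume S: "S \<subseteq> ?V" "card S < 2"
    have "card {1,k+1} = 2" using k by auto
    hence "S \<noteq> {1,k+1}" using S by auto
    hence "conn (?V - S) ?E" using odd_conn[OF k S(1)] S(2) by auto
    moreover have "card (?V - S) = 2*k+1 - card S"
      using S(1) by (simp add: card_Diff_subset finite_subset)
    ultimately show "\<not> disconnected_graph (?V - S) ?E \<and> \<not> card (?V - S) \<le> 1"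
      using S k by (auto simp: disc_conn)
  next
    show "{1,k+1} \<subseteq> ?V" "card {1,k+1} = 2" using k by auto
    show "disconnected_graph (?V - {1,k+1}) ?E" using odd_cut[OF k] by (auto simp: disc_conn)
  qed
  show ?thesis
  proof
    assume m: "minimum_vertex_cut ?V ?E S"
    hence S: "S \<subseteq> ?V" "\<not> conn (?V - S) ?E" "card S = 2"
      unfolding minimum_vertex_cut_def vertex_cut_def c2 by (auto simp: disc_conn)
    show "S = {1,k+1}"
      using odd_conn[OF k S(1)] S by auto
  next
    assume S: "S = {1,k+1}"
    have "S \<subseteq> ?V" "card S = 2" using S k by auto
    moreover have "\<not> conn (?V - S) ?E" using odd_cut[OF k] S by simp
    ultimately show "minimum_vertex_cut ?V ?E S"
      unfolding minimum_vertex_cut_def vertex_cut_def c2 by (auto simp: disc_conn)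
  qed
qed

theorem mainTheorem7:
  fixes n :: nat
  assumes "n \<ge> 7"
  shows "connected_graph (Gn_vertices n) (Gn_edges n)
    \<and> card (Gn_vertices n) = n
    \<and> card (Gn_edges n) = (3 * n) div 2 + 1
    \<and> (\<forall>S. minimum_vertex_cut (Gn_vertices n) (Gn_edges n) S \<longrightarrow> induces_edge (Gn_edges n) S)
    \<and> (odd n \<longrightarrow> {S. minimum_vertex_cut (Gn_vertices n) (Gn_edges n) S} = {{1, (n + 1) div 2}})
    \<and> (even n \<longrightarrow> {S. minimum_vertex_cut (Gn_vertices n) (Gn_edges n) S} = {{2, n}, {n div 2, (n + 4) div 2}})
    \<and> \<not> (\<exists>S. minimum_vertex_cut (Gn_vertices n) (Gn_edges n) S \<and> independent_set (Gn_edges n) S)"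
proof (cases "even n")
  case True
  then obtain k where nk: "n = 2*k" by (auto elim: evenE)
  have k: "4 \<le> k" using assms nk by arith
  have V: "Gn_vertices n = {1..2*k}" using nk by (simp add: Gn_vertices_def)
  have cuts: "minimum_vertex_cut (Gn_vertices n) (Gn_edges n) S \<longleftrightarrow> (S = {2,2*k} \<or> S = {k,k+2})" for S
    using even_cuts[OF k] V nk by simp
  have "{2,2*k} \<in> Gn_edges (2*k)" by (rule Ee_ch) (use k in auto)
  hence e1: "{2,2*k} \<in> Gn_edges n" using nk by simp
  have "{k,k+2} \<in> Gn_edges (2*k)" by (rule Ee_ch) (use k in auto)
  hence e2: "{k,k+2} \<in> Gn_edges n" using nk by simp
  have ie: "induces_edge (Gn_edges n) S" if "minimum_vertex_cut (Gn_vertices n) (Gn_edges n) S" for S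
    using that cuts e1 e2 unfolding induces_edge_def by auto
  have cn: "conn {1..2*k} (Gn_edges (2*k))" using even_conn[OF k, of "{}"] by simp
  show ?thesis
  proof (intro conjI)
    show "connected_graph (Gn_vertices n) (Gn_edges n)"
      using cn V nk k unfolding connected_graph_def conn_def by auto
    show "card (Gn_vertices n) = n" by (simp add: Gn_vertices_def)
    show "card (Gn_edges n) = 3 * n div 2 + 1" using card_even[OF k] nk by simp
    show "\<forall>S. minimum_vertex_cut (Gn_vertices n) (Gn_edges n) S \<longrightarrow> induces_edge (Gn_edges n) S"
      using ie by blast
    show "odd n \<longrightarrow> {S. minimum_vertex_cut (Gn_vertices n) (Gn_edges n) S} = {{1, (n + 1) div 2}}"
      using True by simp
    have "n div 2 = k" "(n + 4) div 2 = k + 2" using nk by auto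
    thus "even n \<longrightarrow> {S. minimum_vertex_cut (Gn_vertices n) (Gn_edges n) S} = {{2, n}, {n div 2, (n + 4) div 2}}"
      using cuts nk by auto
    show "\<not> (\<exists>S. minimum_vertex_cut (Gn_vertices n) (Gn_edges n) S \<and> independent_set (Gn_edges n) S)"
      using ie unfolding independent_set_def induces_edge_def by blast
  qed
next
  case False
  then obtain k where nk: "n = 2*k+1" using oddE by blast
  have k: "3 \<le> k" using assms nk by arith
  have V: "Gn_vertices n = {1..2*k+1}" using nk by (simp add: Gn_vertices_def)
  have cuts: "minimum_vertex_cut (Gn_vertices n) (Gn_edges n) S \<longleftrightarrow> S = {1,k+1}" for S
    using odd_cuts[OF k] V nk by simp
  have e1: "{1,k+1} \<in> Gn_edges n" using nk Eo_x(1) by simp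
  have ie: "induces_edge (Gn_edges n) S" if "minimum_vertex_cut (Gn_vertices n) (Gn_edges n) S" for S
    using that cuts e1 unfolding induces_edge_def by auto
  have cn: "conn {1..2*k+1} (Gn_edges (2*k+1))" using odd_conn[OF k, of "{}"] k by simp
  show ?thesis
  proof (intro conjI)
    show "connected_graph (Gn_vertices n) (Gn_edges n)"
      using cn V nk k unfolding connected_graph_def conn_def by auto
    show "card (Gn_vertices n) = n" by (simp add: Gn_vertices_def)
    show "card (Gn_edges n) = 3 * n div 2 + 1" using card_odd[OF k] nk by simp
    show "\<forall>S. minimum_vertex_cut (Gn_vertices n) (Gn_edges n) S \<longrightarrow> induces_edge (Gn_edges n) S"
      using ie by blast
    have "(n + 1) div 2 = k + 1" using nk by auto
    thus "odd n \<longrightarrow> {S. minimum_vertex_cut (Gn_vertices n) (Gn_edges n) S} = {{1, (n + 1) div 2}}"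
      using cuts by auto
    show "even n \<longrightarrow> {S. minimum_vertex_cut (Gn_vertices n) (Gn_edges n) S} = {{2, n}, {n div 2, (n + 4) div 2}}"
      using False by simp
    show "\<not> (\<exists>S. minimum_vertex_cut (Gn_vertices n) (Gn_edges n) S \<and> independent_set (Gn_edges n) S)"
      using ie unfolding independent_set_def induces_edge_def by blast
  qed
qed

end
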